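(* Let $\mathbf{A}$ be a stably free ideal domain (resp. a semistably free ideal domain) and let $S\subseteq\mathbf{A}$ be a two-sided denominator set with $0\notin S$. Then the localization $S^{-1}\mathbf{A}$ is a stably free ideal domain (resp. a semistably free ideal domain).
   Context: A module $P$ over a ring $\mathbf{A}$ is stably free if there exist integers $q,r\ge 0$ with $P\oplus \mathbf{A}^{q}\cong \mathbf{A}^{q+r}$. A stably free ideal domain is a (left and right) Noetherian domain in which every left ideal and every right ideal is stably free. A semistably free ideal domain is a (left and right) Ore domain in which every finitely generated left ideal and every finitely generated right ideal is stably free. A two-sided denominator set is a multiplicatively closed subset $S$ (containing $1$) satisfying the left and right Ore conditions and left and right reversibility, so that the classical localization $S^{-1}\mathbf{A}=\mathbf{A}S^{-1}$ exists. *)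

theory Defs
  imports Main
begin

text \<open>Modules are left (resp. right) modules; the free module A^n is modelled as
the functions nat => A vanishing outside {0..<n}.\<close>

definition vecs :: "nat \<Rightarrow> (nat \<Rightarrow> 'a::zero) set" where
  "vecs n = {v. \<forall>i\<ge>n. v i = 0}"

definition left_ideal :: "'a::ring_1 set \<Rightarrow> bool" where
  "left_ideal I \<longleftrightarrow> 0 \<in> I \<and> (\<forall>x\<in>I. \<forall>y\<in>I. x + y \<in> I) \<and> (\<forall>a. \<forall>x\<in>I. a * x \<in> I)"

definition right_ideal :: "'a::ring_1 set \<Rightarrow> bool" where
  "right_ideal I \<longleftrightarrow> 0 \<in> I \<and> (\<forall>x\<in>I. \<forall>y\<in>I. x + y \<in> I) \<and> (\<forall>a. \<forall>x\<in>I. x * a \<in> I)"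

definition left_span :: "'a::ring_1 set \<Rightarrow> 'a set" where
  "left_span G = {x. \<exists>c. x = (\<Sum>g\<in>G. c g * g)}"

definition right_span :: "'a::ring_1 set \<Rightarrow> 'a set" where
  "right_span G = {x. \<exists>c. x = (\<Sum>g\<in>G. g * c g)}"

definition fg_left_ideal :: "'a::ring_1 set \<Rightarrow> bool" where
  "fg_left_ideal I \<longleftrightarrow> (\<exists>G. finite G \<and> I = left_span G)"

definition fg_right_ideal :: "'a::ring_1 set \<Rightarrow> bool" where
  "fg_right_ideal I \<longleftrightarrow> (\<exists>G. finite G \<and> I = right_span G)"

text \<open>A left ideal P is stably free (as left module): P \<oplus> A^q \<cong> A^(q+r) as left A-modules.\<close>
definition stably_free_left :: "'a::ring_1 set \<Rightarrow> bool" where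
  "stably_free_left P \<longleftrightarrow> (\<exists>q r f. bij_betw f (P \<times> vecs q) (vecs (q + r)) \<and>
     (\<forall>x\<in>P \<times> vecs q. \<forall>y\<in>P \<times> vecs q.
        f (fst x + fst y, \<lambda>k. snd x k + snd y k) = (\<lambda>k. f x k + f y k)) \<and>
     (\<forall>a. \<forall>x\<in>P \<times> vecs q. f (a * fst x, \<lambda>k. a * snd x k) = (\<lambda>k. a * f x k)))"

definition stably_free_right :: "'a::ring_1 set \<Rightarrow> bool" where
  "stably_free_right P \<longleftrightarrow> (\<exists>q r f. bij_betw f (P \<times> vecs q) (vecs (q + r)) \<and>
     (\<forall>x\<in>P \<times> vecs q. \<forall>y\<in>P \<times> vecs q.
        f (fst x + fst y, \<lambda>k. snd x k + snd y k) = (\<lambda>k. f x k + f y k)) \<and>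
     (\<forall>a. \<forall>x\<in>P \<times> vecs q. f (fst x * a, \<lambda>k. snd x k * a) = (\<lambda>k. f x k * a)))"

text \<open>Ring-theoretic properties of the whole ring (the type).  Note ring_1 already has 0 \<noteq> 1.\<close>
definition is_domain :: "'a::ring_1 itself \<Rightarrow> bool" where
  "is_domain _ \<longleftrightarrow> (\<forall>a b :: 'a. a * b = 0 \<longrightarrow> a = 0 \<or> b = 0)"

definition left_noetherian :: "'a::ring_1 itself \<Rightarrow> bool" where
  "left_noetherian _ \<longleftrightarrow> (\<forall>I :: nat \<Rightarrow> 'a set. (\<forall>n. left_ideal (I n)) \<and> mono I \<longrightarrow>
       (\<exists>n. \<forall>m\<ge>n. I m = I n))"

definition right_noetherian :: "'a::ring_1 itself \<Rightarrow> bool" where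
  "right_noetherian _ \<longleftrightarrow> (\<forall>I :: nat \<Rightarrow> 'a set. (\<forall>n. right_ideal (I n)) \<and> mono I \<longrightarrow>
       (\<exists>n. \<forall>m\<ge>n. I m = I n))"

text \<open>Ore domain: for nonzero a, b, Aa \<inter> Ab \<noteq> 0 (left) and aA \<inter> bA \<noteq> 0 (right).\<close>
definition ore_domain :: "'a::ring_1 itself \<Rightarrow> bool" where
  "ore_domain T \<longleftrightarrow> is_domain T \<and>
     (\<forall>a b :: 'a. a \<noteq> 0 \<and> b \<noteq> 0 \<longrightarrow> (\<exists>x y. x * a = y * b \<and> x * a \<noteq> 0)) \<and>
     (\<forall>a b :: 'a. a \<noteq> 0 \<and> b \<noteq> 0 \<longrightarrow> (\<exists>x y. a * x = b * y \<and> a * x \<noteq> 0))"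

definition stably_free_ideal_domain :: "'a::ring_1 itself \<Rightarrow> bool" where
  "stably_free_ideal_domain T \<longleftrightarrow> is_domain T \<and> left_noetherian T \<and> right_noetherian T \<and>
     (\<forall>I :: 'a set. left_ideal I \<longrightarrow> stably_free_left I) \<and>
     (\<forall>I :: 'a set. right_ideal I \<longrightarrow> stably_free_right I)"

definition semistably_free_ideal_domain :: "'a::ring_1 itself \<Rightarrow> bool" where
  "semistably_free_ideal_domain T \<longleftrightarrow> ore_domain T \<and>
     (\<forall>I :: 'a set. fg_left_ideal I \<longrightarrow> stably_free_left I) \<and>
     (\<forall>I :: 'a set. fg_right_ideal I \<longrightarrow> stably_free_right I)"

definition two_sided_denominator_set :: "'a::ring_1 set \<Rightarrow> bool" where
  "two_sided_denominator_set S \<longleftrightarrow> 1 \<in> S \<and> (\<forall>s\<in>S. \<forall>t\<in>S. s * t \<in> S) \<and>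
     (\<forall>a. \<forall>s\<in>S. \<exists>b. \<exists>t\<in>S. a * t = s * b) \<and>
     (\<forall>a. \<forall>s\<in>S. \<exists>b. \<exists>t\<in>S. t * a = b * s) \<and>
     (\<forall>a. \<forall>s\<in>S. s * a = 0 \<longrightarrow> (\<exists>t\<in>S. a * t = 0)) \<and>
     (\<forall>a. \<forall>s\<in>S. a * s = 0 \<longrightarrow> (\<exists>t\<in>S. t * a = 0))"

definition ring_hom :: "('a::ring_1 \<Rightarrow> 'b::ring_1) \<Rightarrow> bool" where
  "ring_hom \<phi> \<longleftrightarrow> \<phi> 1 = 1 \<and> (\<forall>x y. \<phi> (x + y) = \<phi> x + \<phi> y) \<and> (\<forall>x y. \<phi> (x * y) = \<phi> x * \<phi> y)"

definition is_unit :: "'b::ring_1 \<Rightarrow> bool" where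
  "is_unit u \<longleftrightarrow> (\<exists>v. u * v = 1 \<and> v * u = 1)"

definition classical_localization :: "'a::ring_1 set \<Rightarrow> ('a \<Rightarrow> 'b::ring_1) \<Rightarrow> bool" where
  "classical_localization S \<phi> \<longleftrightarrow> ring_hom \<phi> \<and> (\<forall>s\<in>S. is_unit (\<phi> s)) \<and>
     (\<forall>b. \<exists>a. \<exists>s\<in>S. b * \<phi> s = \<phi> a) \<and>
     (\<forall>b. \<exists>a. \<exists>s\<in>S. \<phi> s * b = \<phi> a) \<and>
     (\<forall>a. \<phi> a = 0 \<longleftrightarrow> (\<exists>s\<in>S. a * s = 0))"

end

theory Submission
  imports Defs
begin


datatype 'a opp = Opp (unOpp: 'a)

instantiation opp :: (ring_1) ring_1
begin
definition zero_opp_def: "0 = Opp 0"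
definition one_opp_def: "1 = Opp 1"
definition plus_opp_def: "x + y = Opp (unOpp x + unOpp y)"
definition minus_opp_def: "x - y = Opp (unOpp x - unOpp y)"
definition uminus_opp_def: "- x = Opp (- unOpp x)"
definition times_opp_def: "x * y = Opp (unOpp y * unOpp x)"
instance proof
qed (auto simp: zero_opp_def one_opp_def plus_opp_def minus_opp_def uminus_opp_def times_opp_def
   algebra_simps opp.expand)
end

lemma opp_ops[simp]:
  "Opp a + Opp b = Opp (a + b)" "Opp a * Opp b = Opp (b * a)"
  "Opp a = 0 \<longleftrightarrow> a = 0" "Opp a = 1 \<longleftrightarrow> a = 1"
  "unOpp (x + y) = unOpp x + unOpp y" "unOpp (x * y) = unOpp y * unOpp x"
  "unOpp (0::'a::ring_1 opp) = 0" "unOpp (1::'a::ring_1 opp) = 1"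
  for a b :: "'a::ring_1"
  by (auto simp: zero_opp_def one_opp_def plus_opp_def times_opp_def)

lemma unOpp_eq: "unOpp x = a \<longleftrightarrow> x = Opp a" by (cases x) auto

lemma opp_zero: "(0::'a::ring_1 opp) = Opp 0" by (simp add: zero_opp_def)
lemma opp_one: "(1::'a::ring_1 opp) = Opp 1" by (simp add: one_opp_def)

lemma all_opp: "(\<forall>x. P x) \<longleftrightarrow> (\<forall>a. P (Opp a))" by (metis opp.exhaust)
lemma ex_opp: "(\<exists>x. P x) \<longleftrightarrow> (\<exists>a. P (Opp a))" by (metis opp.exhaust)
lemma ball_opp: "(\<forall>x\<in>Opp ` A. P x) \<longleftrightarrow> (\<forall>a\<in>A. P (Opp a))" by blast
lemma bex_opp: "(\<exists>x\<in>Opp ` A. P x) \<longleftrightarrow> (\<exists>a\<in>A. P (Opp a))" by blast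
lemma Opp_mem: "Opp a \<in> Opp ` A \<longleftrightarrow> a \<in> A" by (auto simp: image_iff)
lemma Opp_unOpp_img: "Opp ` unOpp ` X = X" by (force simp: image_iff opp.expand)

lemma opp_domain: "is_domain TYPE('a::ring_1) \<Longrightarrow> is_domain TYPE('a opp)"
  unfolding is_domain_def by (subst all_opp, subst all_opp) (auto simp: opp_zero)

lemma opp_den: "two_sided_denominator_set (S :: 'a::ring_1 set) \<Longrightarrow> two_sided_denominator_set (Opp ` S)"
  unfolding two_sided_denominator_set_def ball_opp
  by (simp add: all_opp ex_opp Opp_mem opp_zero opp_one)

lemma opp_li: "left_ideal (Opp ` I) \<longleftrightarrow> right_ideal (I :: 'a::ring_1 set)"
  unfolding left_ideal_def right_ideal_def ball_opp
  by (simp add: all_opp Opp_mem opp_zero)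

lemma sum_Opp: "(\<Sum>x\<in>A. Opp (f x)) = Opp (\<Sum>x\<in>A. f x)"
  by (induction A rule: infinite_finite_induct) (auto simp: opp_zero)

lemma ls_opp: "left_span (Opp ` G) = Opp ` right_span (G :: 'a::ring_1 set)"
proof -
  have e: "(\<Sum>g\<in>Opp ` G. c g * g) = Opp (\<Sum>h\<in>G. h * unOpp (c (Opp h)))" for c :: "'a opp \<Rightarrow> 'a opp"
  proof -
    have "(\<Sum>g\<in>Opp ` G. c g * g) = (\<Sum>h\<in>G. c (Opp h) * Opp h)"
      by (simp add: sum.reindex inj_on_def)
    also have "\<dots> = (\<Sum>h\<in>G. Opp (h * unOpp (c (Opp h))))"
      by (intro sum.cong refl) (metis opp.exhaust_sel opp_ops(2))
    finally show ?thesis by (simp add: sum_Opp)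
  qed
  show ?thesis
  proof
    show "left_span (Opp ` G) \<subseteq> Opp ` right_span G"
    proof
      fix x assume "x \<in> left_span (Opp ` G)"
      then obtain c where "x = (\<Sum>g\<in>Opp ` G. c g * g)" unfolding left_span_def by (auto simp only: mem_Collect_eq)
      then have "x = Opp (\<Sum>h\<in>G. h * unOpp (c (Opp h)))" using e by simp
      then show "x \<in> Opp ` right_span G" unfolding right_span_def
        by (rule image_eqI) (rule CollectI, rule exI, rule refl)
    qed
    show "Opp ` right_span G \<subseteq> left_span (Opp ` G)"
    proof
      fix x assume "x \<in> Opp ` right_span G"
      then obtain y d where "x = Opp y" "y = (\<Sum>h\<in>G. h * d h)" unfolding right_span_def by (auto simp only: mem_Collect_eq image_iff)
      then have "x = (\<Sum>g\<in>Opp ` G. (\<lambda>y. Opp (d (unOpp y))) g * g)" using e by simp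
      then show "x \<in> left_span (Opp ` G)" unfolding left_span_def by (simp only: mem_Collect_eq) (rule exI, rule refl)
    qed
  qed
qed

lemma opp_fg: "fg_left_ideal (Opp ` I) \<longleftrightarrow> fg_right_ideal (I :: 'a::ring_1 set)"
proof
  assume "fg_left_ideal (Opp ` I)"
  then obtain G' where G': "finite G'" "Opp ` I = left_span G'" unfolding fg_left_ideal_def by blast
  have "left_span G' = Opp ` right_span (unOpp ` G')" using ls_opp[of "unOpp ` G'"] by (simp add: Opp_unOpp_img)
  then have "Opp ` I = Opp ` right_span (unOpp ` G')" using G' by simp
  then have "I = right_span (unOpp ` G')" by (simp add: inj_image_eq_iff inj_on_def)
  then show "fg_right_ideal I" unfolding fg_right_ideal_def using G' by blast
next
  assume "fg_right_ideal I"
  then obtain G where "finite G" "I = right_span G" unfolding fg_right_ideal_def by blast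
  then show "fg_left_ideal (Opp ` I)" unfolding fg_left_ideal_def using ls_opp by blast
qed

lemma vecs_opp1: "(\<lambda>k. Opp (w k)) \<in> vecs n \<longleftrightarrow> w \<in> vecs n"
  by (simp add: vecs_def opp_zero)
lemma vecs_opp2: "(\<lambda>k. unOpp (v k)) \<in> vecs n \<longleftrightarrow> (v :: nat \<Rightarrow> 'a::ring_1 opp) \<in> vecs n"
  by (simp add: vecs_def opp_zero unOpp_eq)


lemma bij_V: "bij_betw (\<lambda>w k. Opp (w k)) (vecs n) (vecs n :: (nat \<Rightarrow> 'a::ring_1 opp) set)"
proof (rule bij_betw_byWitness[where f'="\<lambda>v k. unOpp (v k)"])
  show "\<forall>a\<in>vecs n. (\<lambda>k. unOpp (Opp (a k))) = a" by simp
  show "\<forall>a'\<in>vecs n. (\<lambda>k. Opp (unOpp (a' k))) = (a' :: nat \<Rightarrow> 'a opp)" by simp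
  show "(\<lambda>w k. Opp (w k)) ` vecs n \<subseteq> (vecs n :: (nat \<Rightarrow> 'a opp) set)" using vecs_opp1 by blast
  show "(\<lambda>v k. unOpp (v k)) ` vecs n \<subseteq> (vecs n :: (nat \<Rightarrow> 'a) set)" using vecs_opp2 by blast
qed

lemma bij_V': "bij_betw (\<lambda>w k. unOpp (w k)) (vecs n :: (nat \<Rightarrow> 'a::ring_1 opp) set) (vecs n)"
proof (rule bij_betw_byWitness[where f'="\<lambda>v k. Opp (v k)"])
  show "\<forall>a\<in>vecs n. (\<lambda>k. Opp (unOpp (a k))) = (a :: nat \<Rightarrow> 'a opp)" by simp
  show "\<forall>a'\<in>vecs n. (\<lambda>k. unOpp (Opp (a' k))) = (a' :: nat \<Rightarrow> 'a)" by simp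
  show "(\<lambda>w k. Opp (w k)) ` vecs n \<subseteq> (vecs n :: (nat \<Rightarrow> 'a opp) set)" using vecs_opp1 by blast
  show "(\<lambda>v k. unOpp (v k)) ` vecs n \<subseteq> (vecs n :: (nat \<Rightarrow> 'a) set)" using vecs_opp2 by blast
qed

lemma bij_H: "bij_betw (\<lambda>p. (unOpp (fst p), \<lambda>k. unOpp (snd p k))) (Opp ` I \<times> vecs q) ((I :: 'a::ring_1 set) \<times> vecs q)"
proof (rule bij_betw_byWitness[where f'="\<lambda>p. (Opp (fst p), \<lambda>k. Opp (snd p k))"])
  show "\<forall>a\<in>Opp ` I \<times> vecs q. (Opp (fst (unOpp (fst a), \<lambda>k. unOpp (snd a k))), \<lambda>k. Opp (snd (unOpp (fst a), \<lambda>k. unOpp (snd a k)) k)) = a"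
    by auto
  show "\<forall>a'\<in>I \<times> vecs q. (unOpp (fst (Opp (fst a'), \<lambda>k. Opp (snd a' k))), \<lambda>k. unOpp (snd (Opp (fst a'), \<lambda>k. Opp (snd a' k)) k)) = a'"
    by auto
  show "(\<lambda>p. (unOpp (fst p), \<lambda>k. unOpp (snd p k))) ` (Opp ` I \<times> vecs q) \<subseteq> I \<times> vecs q"
    using vecs_opp2 by force
  show "(\<lambda>p. (Opp (fst p), \<lambda>k. Opp (snd p k))) ` (I \<times> vecs q) \<subseteq> Opp ` I \<times> vecs q"
    using vecs_opp1 by force
qed

lemma bij_H': "bij_betw (\<lambda>p. (Opp (fst p), \<lambda>k. Opp (snd p k))) ((I :: 'a::ring_1 set) \<times> vecs q) (Opp ` I \<times> vecs q)"
proof (rule bij_betw_byWitness[where f'="\<lambda>p. (unOpp (fst p), \<lambda>k. unOpp (snd p k))"])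
  show "\<forall>a'\<in>Opp ` I \<times> vecs q. (Opp (fst (unOpp (fst a'), \<lambda>k. unOpp (snd a' k))), \<lambda>k. Opp (snd (unOpp (fst a'), \<lambda>k. unOpp (snd a' k)) k)) = a'"
    by auto
  show "\<forall>a\<in>I \<times> vecs q. (unOpp (fst (Opp (fst a), \<lambda>k. Opp (snd a k))), \<lambda>k. unOpp (snd (Opp (fst a), \<lambda>k. Opp (snd a k)) k)) = a"
    by auto
  show "(\<lambda>p. (unOpp (fst p), \<lambda>k. unOpp (snd p k))) ` (Opp ` I \<times> vecs q) \<subseteq> I \<times> vecs q"
    using vecs_opp2 by force
  show "(\<lambda>p. (Opp (fst p), \<lambda>k. Opp (snd p k))) ` (I \<times> vecs q) \<subseteq> Opp ` I \<times> vecs q"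
    using vecs_opp1 by force
qed


lemma mult_Opp_r: "a * Opp z = Opp (z * unOpp a)" by (cases a) simp
lemma mult_Opp_unOpp: "unOpp (a * b) = unOpp b * unOpp a" by simp

lemma sfr_to_sfl: assumes "stably_free_right (I :: 'a::ring_1 set)" shows "stably_free_left (Opp ` I)"
proof -
  obtain q r f where bij: "bij_betw f (I \<times> vecs q) (vecs (q + r))"
    and fadd: "\<forall>x\<in>I \<times> vecs q. \<forall>y\<in>I \<times> vecs q.
        f (fst x + fst y, \<lambda>k. snd x k + snd y k) = (\<lambda>k. f x k + f y k)"
    and flin: "\<forall>a. \<forall>x\<in>I \<times> vecs q. f (fst x * a, \<lambda>k. snd x k * a) = (\<lambda>k. f x k * a)"
    using assms unfolding stably_free_right_def by blast
  define H where "H = (\<lambda>p :: 'a opp \<times> (nat \<Rightarrow> 'a opp). (unOpp (fst p), \<lambda>k. unOpp (snd p k)))"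
  define V where "V = (\<lambda>(w :: nat \<Rightarrow> 'a) k. Opp (w k))"
  define g where "g = (V \<circ> f) \<circ> H"
  have bg: "bij_betw g (Opp ` I \<times> vecs q) (vecs (q + r))"
    unfolding g_def H_def V_def by (rule bij_betw_trans[OF bij_H bij_betw_trans[OF bij bij_V]])
  have Hm: "H x \<in> I \<times> vecs q" if "x \<in> Opp ` I \<times> vecs q" for x
    using bij_betw_apply[OF bij_H that] unfolding H_def .
  have "\<forall>x\<in>Opp ` I \<times> (vecs q :: (nat \<Rightarrow> 'a opp) set). \<forall>y\<in>Opp ` I \<times> vecs q.
        g (fst x + fst y, \<lambda>k. snd x k + snd y k) = (\<lambda>k. g x k + g y k)"
  proof (intro ballI)
    fix x y :: "'a opp \<times> (nat \<Rightarrow> 'a opp)" assume x: "x \<in> Opp ` I \<times> vecs q" and y: "y \<in> Opp ` I \<times> vecs q"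
    have "H (fst x + fst y, \<lambda>k. snd x k + snd y k) = (fst (H x) + fst (H y), \<lambda>k. snd (H x) k + snd (H y) k)"
      unfolding H_def by simp
    then show "g (fst x + fst y, \<lambda>k. snd x k + snd y k) = (\<lambda>k. g x k + g y k)"
      using fadd[rule_format, OF Hm[OF x] Hm[OF y]] unfolding g_def V_def by simp
  qed
  moreover have "\<forall>a. \<forall>x\<in>Opp ` I \<times> (vecs q :: (nat \<Rightarrow> 'a opp) set). g (a * fst x, \<lambda>k. a * snd x k) = (\<lambda>k. a * g x k)"
  proof (intro allI ballI)
    fix a and x :: "'a opp \<times> (nat \<Rightarrow> 'a opp)" assume x: "x \<in> Opp ` I \<times> vecs q"
    have "H (a * fst x, \<lambda>k. a * snd x k) = (fst (H x) * unOpp a, \<lambda>k. snd (H x) k * unOpp a)"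
      unfolding H_def by simp
    then show "g (a * fst x, \<lambda>k. a * snd x k) = (\<lambda>k. a * g x k)"
      using spec[OF flin, of "unOpp a", THEN bspec, OF Hm[OF x]] unfolding g_def V_def by (simp add: mult_Opp_r)
  qed
  ultimately show ?thesis unfolding stably_free_left_def using bg by blast
qed

lemma sfl_to_sfr: assumes "stably_free_left (Opp ` (I :: 'a::ring_1 set))" shows "stably_free_right I"
proof -
  obtain q r g where bij: "bij_betw g (Opp ` I \<times> vecs q) (vecs (q + r))"
    and gadd: "\<forall>x\<in>Opp ` I \<times> vecs q. \<forall>y\<in>Opp ` I \<times> vecs q.
        g (fst x + fst y, \<lambda>k. snd x k + snd y k) = (\<lambda>k. g x k + g y k)"
    and glin: "\<forall>a. \<forall>x\<in>Opp ` I \<times> vecs q. g (a * fst x, \<lambda>k. a * snd x k) = (\<lambda>k. a * g x k)"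
    using assms unfolding stably_free_left_def by blast
  define H where "H = (\<lambda>p :: 'a \<times> (nat \<Rightarrow> 'a). (Opp (fst p), \<lambda>k. Opp (snd p k)))"
  define V where "V = (\<lambda>(w :: nat \<Rightarrow> 'a opp) k. unOpp (w k))"
  define f where "f = (V \<circ> g) \<circ> H"
  have bf: "bij_betw f (I \<times> vecs q) (vecs (q + r))"
    unfolding f_def H_def V_def by (rule bij_betw_trans[OF bij_H' bij_betw_trans[OF bij bij_V']])
  have Hm: "H x \<in> Opp ` I \<times> vecs q" if "x \<in> I \<times> vecs q" for x
    using bij_betw_apply[OF bij_H' that] unfolding H_def .
  have "\<forall>x\<in>I \<times> (vecs q :: (nat \<Rightarrow> 'a) set). \<forall>y\<in>I \<times> vecs q.
        f (fst x + fst y, \<lambda>k. snd x k + snd y k) = (\<lambda>k. f x k + f y k)"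
  proof (intro ballI)
    fix x y :: "'a \<times> (nat \<Rightarrow> 'a)" assume x: "x \<in> I \<times> vecs q" and y: "y \<in> I \<times> vecs q"
    have "H (fst x + fst y, \<lambda>k. snd x k + snd y k) = (fst (H x) + fst (H y), \<lambda>k. snd (H x) k + snd (H y) k)"
      unfolding H_def by simp
    then show "f (fst x + fst y, \<lambda>k. snd x k + snd y k) = (\<lambda>k. f x k + f y k)"
      using gadd[rule_format, OF Hm[OF x] Hm[OF y]] unfolding f_def V_def by simp
  qed
  moreover have "\<forall>a. \<forall>x\<in>I \<times> (vecs q :: (nat \<Rightarrow> 'a) set). f (fst x * a, \<lambda>k. snd x k * a) = (\<lambda>k. f x k * a)"
  proof (intro allI ballI)
    fix a and x :: "'a \<times> (nat \<Rightarrow> 'a)" assume x: "x \<in> I \<times> vecs q"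
    have "H (fst x * a, \<lambda>k. snd x k * a) = (Opp a * fst (H x), \<lambda>k. Opp a * snd (H x) k)"
      unfolding H_def by simp
    then show "f (fst x * a, \<lambda>k. snd x k * a) = (\<lambda>k. f x k * a)"
      using spec[OF glin, of "Opp a", THEN bspec, OF Hm[OF x]] unfolding f_def V_def by simp
  qed
  ultimately show ?thesis unfolding stably_free_right_def using bf by blast
qed



definition uinv :: "'b::ring_1 \<Rightarrow> 'b" where "uinv u = (SOME v. u*v=1 \<and> v*u=1)"

lemma uinv: "is_unit u \<Longrightarrow> u * uinv u = 1 \<and> uinv u * u = 1"
  unfolding uinv_def is_unit_def by (rule someI_ex)

lemma vecs_zero: "v \<in> vecs n \<Longrightarrow> i \<ge> n \<Longrightarrow> v i = 0" by (simp add: vecs_def)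

locale loc =
  fixes S :: "'a::ring_1 set" and \<phi> :: "'a \<Rightarrow> 'b::ring_1"
  assumes den: "two_sided_denominator_set S" and zS: "0 \<notin> S"
    and cl: "classical_localization S \<phi>" and dom: "is_domain TYPE('a)"
begin

lemma hom_add[simp]: "\<phi> (x + y) = \<phi> x + \<phi> y"
  using cl unfolding classical_localization_def ring_hom_def by blast
lemma hom_mult[simp]: "\<phi> (x * y) = \<phi> x * \<phi> y"
  using cl unfolding classical_localization_def ring_hom_def by blast
lemma hom_1[simp]: "\<phi> 1 = 1"
  using cl unfolding classical_localization_def ring_hom_def by blast
lemma hom_0[simp]: "\<phi> 0 = 0"
proof -
  have "\<phi> 0 = \<phi> 0 + \<phi> 0" by (metis add_0 hom_add)
  then show ?thesis by simp
qed
lemma hom_uminus[simp]: "\<phi> (- x) = - \<phi> x"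
  by (metis add.right_inverse add_eq_0_iff hom_0 hom_add)
lemma hom_diff[simp]: "\<phi> (x - y) = \<phi> x - \<phi> y"
  by (metis diff_conv_add_uminus hom_add hom_uminus)

lemma dom': "a * b = 0 \<Longrightarrow> a = 0 \<or> b = 0" for a b :: 'a
  using dom unfolding is_domain_def by blast

lemma hom_zero_iff: "\<phi> a = 0 \<longleftrightarrow> a = 0"
proof
  assume "\<phi> a = 0"
  then obtain s where "s \<in> S" "a * s = 0" using cl unfolding classical_localization_def by blast
  then show "a = 0" using zS dom' by fastforce
qed simp

lemma hom_inj: "\<phi> x = \<phi> y \<Longrightarrow> x = y"
  using hom_zero_iff[of "x - y"] by simp

lemma S1: "1 \<in> S" using den unfolding two_sided_denominator_set_def by blast
lemma Smult: "s \<in> S \<Longrightarrow> t \<in> S \<Longrightarrow> s * t \<in> S"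
  using den unfolding two_sided_denominator_set_def by blast
lemma ore_l: "s \<in> S \<Longrightarrow> \<exists>b. \<exists>t\<in>S. t * a = b * s"
  using den unfolding two_sided_denominator_set_def by blast
lemma ore_r: "s \<in> S \<Longrightarrow> \<exists>b. \<exists>t\<in>S. a * t = s * b"
  using den unfolding two_sided_denominator_set_def by blast

lemma unitS: "s \<in> S \<Longrightarrow> \<phi> s * uinv (\<phi> s) = 1 \<and> uinv (\<phi> s) * \<phi> s = 1"
  using cl uinv unfolding classical_localization_def by blast

lemma cancelS: "s \<in> S \<Longrightarrow> \<phi> s * x = \<phi> s * y \<Longrightarrow> x = y"
  by (metis mult.assoc mult_1 unitS)
lemma cancelS_r: "s \<in> S \<Longrightarrow> x * \<phi> s = y * \<phi> s \<Longrightarrow> x = y"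
  by (metis mult.assoc mult.right_neutral unitS)

lemma solveS: "s \<in> S \<Longrightarrow> \<phi> s * b = c \<Longrightarrow> b = uinv (\<phi> s) * c"
  by (metis mult.assoc mult_1 unitS)
lemma solveS_r: "s \<in> S \<Longrightarrow> b * \<phi> s = c \<Longrightarrow> b = c * uinv (\<phi> s)"
  by (metis mult.assoc mult.right_neutral unitS)

lemma lfrac: "\<exists>a. \<exists>s\<in>S. \<phi> s * b = \<phi> a"
  using cl unfolding classical_localization_def by blast
lemma rfrac: "\<exists>a. \<exists>s\<in>S. b * \<phi> s = \<phi> a"
  using cl unfolding classical_localization_def by blast

lemma common: "s1 \<in> S \<Longrightarrow> s2 \<in> S \<Longrightarrow> \<exists>u\<in>S. \<exists>x1 x2. u = x1 * s1 \<and> u = x2 * s2"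
proof -
  assume "s1 \<in> S" "s2 \<in> S"
  then obtain b t where "t \<in> S" "t * s1 = b * s2" using ore_l by blast
  then show ?thesis using Smult \<open>s1 \<in> S\<close> by metis
qed

lemma commonN: "(\<forall>i<(n::nat). s i \<in> S) \<Longrightarrow> \<exists>u\<in>S. \<exists>x. \<forall>i<n. u = x i * s i"
proof (induction n)
  case 0 then show ?case using S1 by auto
next
  case (Suc n)
  then obtain u x where u: "u \<in> S" "\<forall>i<n. u = x i * s i" by auto
  obtain u' y1 y2 where u': "u' \<in> S" "u' = y1 * u" "u' = y2 * s n"
    using common[OF u(1), of "s n"] Suc.prems by (metis lessI)
  show ?case
  proof (intro bexI exI allI impI)
    fix i assume "i < Suc n"
    then show "u' = (\<lambda>i. if i < n then y1 * x i else y2) i * s i"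
      using u u' by (auto simp: mult.assoc less_Suc_eq)
  qed fact
qed

lemma uinv_mult: "u \<in> S \<Longrightarrow> s \<in> S \<Longrightarrow> u = x * s \<Longrightarrow> uinv (\<phi> s) = uinv (\<phi> u) * \<phi> x"
proof -
  assume a: "u \<in> S" "s \<in> S" "u = x * s"
  have "uinv (\<phi> u) * \<phi> x * \<phi> s = 1" using a unitS[of u] by (simp add: mult.assoc)
  then have "uinv (\<phi> u) * \<phi> x * \<phi> s * uinv (\<phi> s) = uinv (\<phi> s)" by simp
  then show ?thesis using unitS[OF a(2)] by (simp add: mult.assoc)
qed


definition locJ :: "'a set \<Rightarrow> 'b set" where
  "locJ I = {b. \<exists>s\<in>S. \<exists>a\<in>I. \<phi> s * b = \<phi> a}"

definition rep :: "'a set \<Rightarrow> nat \<Rightarrow> 'b \<Rightarrow> (nat \<Rightarrow> 'b) \<Rightarrow> 'a \<Rightarrow> 'a \<Rightarrow> (nat \<Rightarrow> 'a) \<Rightarrow> bool" where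
  "rep I q b v s a c \<longleftrightarrow> s \<in> S \<and> a \<in> I \<and> c \<in> vecs q \<and> \<phi> s * b = \<phi> a \<and> (\<forall>k. \<phi> s * v k = \<phi> (c k))"

lemma li_mult: "left_ideal I \<Longrightarrow> a \<in> I \<Longrightarrow> x * a \<in> I"
  unfolding left_ideal_def by blast
lemma li_add: "left_ideal I \<Longrightarrow> a \<in> I \<Longrightarrow> b \<in> I \<Longrightarrow> a + b \<in> I"
  unfolding left_ideal_def by blast
lemma li_0: "left_ideal I \<Longrightarrow> 0 \<in> I"
  unfolding left_ideal_def by blast

lemma rep_exists:
  assumes I: "left_ideal I" and b: "b \<in> locJ I" and v: "v \<in> vecs q"
  shows "\<exists>s a c. rep I q b v s a c"
proof -
  obtain s0 a0 where s0: "s0 \<in> S" "a0 \<in> I" "\<phi> s0 * b = \<phi> a0" using b unfolding locJ_def by blast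
  have "\<forall>k. \<exists>s c. s \<in> S \<and> \<phi> s * v k = \<phi> c" using lfrac by metis
  then obtain sv cv where sv: "\<And>k. sv k \<in> S" "\<And>k. \<phi> (sv k) * v k = \<phi> (cv k)" by metis
  define sf where "sf i = (if i = 0 then s0 else sv (i - 1))" for i
  have "\<forall>i<Suc q. sf i \<in> S" using s0 sv by (simp add: sf_def)
  then obtain u x where u: "u \<in> S" "\<forall>i<Suc q. u = x i * sf i" using commonN by blast
  define c where "c k = (if k < q then x (Suc k) * cv k else 0)" for k
  show ?thesis unfolding rep_def
  proof (intro exI conjI allI)
    show "u \<in> S" by fact
    show "x 0 * a0 \<in> I" using li_mult[OF I s0(2)] .
    show "c \<in> vecs q" by (simp add: c_def vecs_def)
    have "u = x 0 * s0" using u(2) by (auto simp: sf_def)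
    then show "\<phi> u * b = \<phi> (x 0 * a0)" using s0 by (simp add: mult.assoc)
    fix k
    show "\<phi> u * v k = \<phi> (c k)"
    proof (cases "k < q")
      case True
      then have "u = x (Suc k) * sv k" using u(2) by (auto simp: sf_def)
      then show ?thesis using True sv by (simp add: c_def mult.assoc)
    next
      case False
      then show ?thesis using vecs_zero[OF v] by (simp add: c_def)
    qed
  qed
qed

lemma rep_rescale:
  assumes I: "left_ideal I" and r: "rep I q b v s a c" and xs: "x * s \<in> S"
  shows "rep I q b v (x * s) (x * a) (\<lambda>k. x * c k)"
  using r xs li_mult[OF I] unfolding rep_def vecs_def by (auto simp: mult.assoc)

lemma rep_common:
  assumes I: "left_ideal I" and r1: "rep I q b v s a c" and r2: "rep I q b' v' s' a' c'"
  shows "\<exists>u a1 c1 a2 c2. rep I q b v u a1 c1 \<and> rep I q b' v' u a2 c2"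
proof -
  obtain u x1 x2 where "u \<in> S" "u = x1 * s" "u = x2 * s'"
    using common r1 r2 unfolding rep_def by blast
  then show ?thesis using rep_rescale[OF I r1, of x1] rep_rescale[OF I r2, of x2] by metis
qed

lemma locJ_ideal:
  assumes I: "left_ideal I" shows "left_ideal (locJ I)"
  unfolding left_ideal_def
proof (intro conjI ballI allI)
  show "0 \<in> locJ I" unfolding locJ_def using S1 li_0[OF I] by force
  fix x y assume x: "x \<in> locJ I" and y: "y \<in> locJ I"
  obtain s a c where r1: "rep I 0 x (\<lambda>_. 0) s a c" using rep_exists[OF I x, of "\<lambda>_. 0" 0] by (auto simp: vecs_def)
  obtain s' a' c' where r2: "rep I 0 y (\<lambda>_. 0) s' a' c'" using rep_exists[OF I y, of "\<lambda>_. 0" 0] by (auto simp: vecs_def)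
  obtain u a1 c1 a2 c2 where "rep I 0 x (\<lambda>_. 0) u a1 c1" "rep I 0 y (\<lambda>_. 0) u a2 c2"
    using rep_common[OF I r1 r2] by blast
  then show "x + y \<in> locJ I" unfolding locJ_def rep_def
    by (intro CollectI bexI[of _ u] bexI[of _ "a1 + a2"]) (auto simp: distrib_left li_add[OF I])
next
  fix \<beta> x assume x: "x \<in> locJ I"
  obtain s a where sa: "s \<in> S" "a \<in> I" "\<phi> s * x = \<phi> a" using x unfolding locJ_def by blast
  obtain y t where t: "t \<in> S" "\<phi> t * (\<beta> * uinv (\<phi> s)) = \<phi> y" using lfrac by blast
  have "x = uinv (\<phi> s) * \<phi> a" using solveS sa by blast
  then have "\<phi> t * (\<beta> * x) = \<phi> (y * a)" using t by (simp add: mult.assoc[symmetric])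
  then show "\<beta> * x \<in> locJ I" unfolding locJ_def using t li_mult[OF I sa(2)] by blast
qed


lemma sf_transfer:
  assumes I: "left_ideal I" and sf: "stably_free_left I"
  shows "stably_free_left (locJ I)"
proof -
  obtain q r f where bij: "bij_betw f (I \<times> vecs q) (vecs (q + r))"
    and fadd: "\<forall>x\<in>I \<times> vecs q. \<forall>y\<in>I \<times> vecs q.
        f (fst x + fst y, \<lambda>k. snd x k + snd y k) = (\<lambda>k. f x k + f y k)"
    and flin: "\<forall>a. \<forall>x\<in>I \<times> vecs q. f (a * fst x, \<lambda>k. a * snd x k) = (\<lambda>k. a * f x k)"
    using sf unfolding stably_free_left_def by blast
  have flin': "f (x * a, \<lambda>k. x * c k) = (\<lambda>k. x * f (a, c) k)" if "a \<in> I" "c \<in> vecs q" for x a c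
    using flin that by force
  have fadd': "f (a + a', \<lambda>k. c k + c' k) = (\<lambda>k. f (a, c) k + f (a', c') k)"
    if "a \<in> I" "c \<in> vecs q" "a' \<in> I" "c' \<in> vecs q" for a c a' c'
    using fadd that by force
  have fvec: "f (a, c) \<in> vecs (q + r)" if "a \<in> I" "c \<in> vecs q" for a c
    using bij that unfolding bij_betw_def by blast
  define val where "val s a c = (\<lambda>k. uinv (\<phi> s) * \<phi> (f (a, c) k))" for s a c
  have uniq: "val s a c = val s' a' c'" if r1: "rep I q b v s a c" and r2: "rep I q b v s' a' c'" for b v s a c s' a' c'
  proof -
    obtain u x x' where u: "u \<in> S" "u = x * s" "u = x' * s'" using common r1 r2 unfolding rep_def by blast
    have "\<phi> (x * a) = \<phi> (x' * a')"
    proof -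
      have "\<phi> (x * a) = \<phi> u * b" using r1 u unfolding rep_def by (simp add: mult.assoc)
      also have "\<dots> = \<phi> (x' * s') * b" using u by simp
      also have "\<dots> = \<phi> (x' * a')" using r2 unfolding rep_def by (simp add: mult.assoc)
      finally show ?thesis .
    qed
    then have ea: "x * a = x' * a'" by (rule hom_inj)
    have "\<phi> (x * c k) = \<phi> (x' * c' k)" for k
    proof -
      have "\<phi> (x * c k) = \<phi> u * v k" using r1 u unfolding rep_def by (simp add: mult.assoc)
      also have "\<dots> = \<phi> (x' * s') * v k" using u by simp
      also have "\<dots> = \<phi> (x' * c' k)" using r2 unfolding rep_def by (simp add: mult.assoc)
      finally show ?thesis .
    qed
    then have ec: "(\<lambda>k. x * c k) = (\<lambda>k. x' * c' k)" using hom_inj by blast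
    have "(\<lambda>k. x * f (a, c) k) = (\<lambda>k. x' * f (a', c') k)"
      using flin'[of a c x] flin'[of a' c' x'] r1 r2 ea ec unfolding rep_def by metis
    then have e: "x * f (a, c) k = x' * f (a', c') k" for k by metis
    have s: "s \<in> S" "s' \<in> S" using r1 r2 unfolding rep_def by auto
    show ?thesis unfolding val_def
    proof
      fix k
      have "uinv (\<phi> s) * \<phi> (f (a, c) k) = uinv (\<phi> u) * \<phi> (x * f (a, c) k)"
        using uinv_mult[OF u(1) s(1) u(2)] by (simp add: mult.assoc)
      also have "\<dots> = uinv (\<phi> u) * \<phi> (x' * f (a', c') k)" using e by simp
      also have "\<dots> = uinv (\<phi> s') * \<phi> (f (a', c') k)"
        using uinv_mult[OF u(1) s(2) u(3)] by (simp add: mult.assoc)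
      finally show "uinv (\<phi> s) * \<phi> (f (a, c) k) = uinv (\<phi> s') * \<phi> (f (a', c') k)" .
    qed
  qed
  define g where "g p = (let (s, a, c) = (SOME t. rep I q (fst p) (snd p) (fst t) (fst (snd t)) (snd (snd t)))
     in val s a c)" for p
  have grep: "g (b, v) = val s a c" if r: "rep I q b v s a c" for b v s a c
  proof -
    let ?t = "SOME t. rep I q b v (fst t) (fst (snd t)) (snd (snd t))"
    have "rep I q b v (fst ?t) (fst (snd ?t)) (snd (snd ?t))"
      by (rule someI[of _ "(s, a, c)"]) (simp add: r)
    then have "val (fst ?t) (fst (snd ?t)) (snd (snd ?t)) = val s a c" using uniq r by blast
    then show ?thesis unfolding g_def by (simp add: case_prod_beta)
  qed
  have ex: "\<exists>s a c. rep I q b v s a c" if "b \<in> locJ I" "v \<in> vecs q" for b v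
    using rep_exists[OF I] that by blast
  have "bij_betw g (locJ I \<times> vecs q) (vecs (q + r))"
    unfolding bij_betw_def
  proof (intro conjI)
    show "inj_on g (locJ I \<times> vecs q)"
    proof (rule inj_onI, clarify)
      fix b v b' v' assume m: "b \<in> locJ I" "v \<in> vecs q" "b' \<in> locJ I" "v' \<in> vecs q" and geq: "g (b, v) = g (b', v')"
      obtain s a c s' a' c' where "rep I q b v s a c" "rep I q b' v' s' a' c'" using ex[OF m(1,2)] ex[OF m(3,4)] by blast
      note rr = this
      obtain u a c a' c' where r1: "rep I q b v u a c" and r2: "rep I q b' v' u a' c'"
        using rep_common[OF I rr(1) rr(2)] by blast
      have u: "u \<in> S" using r1 unfolding rep_def by auto
      have "val u a c = val u a' c'" using geq grep r1 r2 by metis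
      then have "\<phi> u * (uinv (\<phi> u) * \<phi> (f (a, c) k)) = \<phi> u * (uinv (\<phi> u) * \<phi> (f (a', c') k))" for k
        unfolding val_def by metis
      then have "\<phi> (f (a, c) k) = \<phi> (f (a', c') k)" for k using unitS[OF u] by (simp add: mult.assoc[symmetric])
      then have "f (a, c) = f (a', c')" using hom_inj by blast
      then have "(a, c) = (a', c')" using bij r1 r2 unfolding bij_betw_def inj_on_def rep_def by blast
      then have "\<phi> u * b = \<phi> u * b'" "\<And>k. \<phi> u * v k = \<phi> u * v' k" using r1 r2 unfolding rep_def by auto
      then show "b = b' \<and> v = v'" using cancelS[OF u] by blast
    qed
    show "g ` (locJ I \<times> vecs q) = vecs (q + r)"
    proof
      show "g ` (locJ I \<times> vecs q) \<subseteq> vecs (q + r)"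
      proof clarify
        fix b :: 'b and v :: "nat \<Rightarrow> 'b" assume "b \<in> locJ I" "v \<in> vecs q"
        then obtain s a c where r: "rep I q b v s a c" using ex by metis
        then have "f (a, c) \<in> vecs (q + r)" using fvec unfolding rep_def by blast
        then show "g (b, v) \<in> vecs (q + r)" using grep[OF r] unfolding val_def vecs_def by simp
      qed
      show "vecs (q + r) \<subseteq> g ` (locJ I \<times> vecs q)"
      proof
        fix w :: "nat \<Rightarrow> 'b" assume w: "w \<in> vecs (q + r)"
        have "\<forall>k. \<exists>s d. s \<in> S \<and> \<phi> s * w k = \<phi> d" using lfrac by metis
        then obtain sw dw where sw: "\<And>k. sw k \<in> S" "\<And>k. \<phi> (sw k) * w k = \<phi> (dw k)" by metis
        obtain u x where u: "u \<in> S" "\<forall>i<q + r. u = x i * sw i" using commonN[of "q + r" sw] sw by blast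
        define d where "d k = (if k < q + r then x k * dw k else 0)" for k
        have dv: "d \<in> vecs (q + r)" by (simp add: d_def vecs_def)
        have ud: "\<phi> u * w k = \<phi> (d k)" for k
        proof (cases "k < q + r")
          case True then show ?thesis using u sw by (simp add: d_def mult.assoc)
        next
          case False then show ?thesis using vecs_zero[OF w] by (simp add: d_def)
        qed
        have "d \<in> f ` (I \<times> vecs q)" using bij dv by (simp add: bij_betw_def)
        then obtain p where p: "p \<in> I \<times> vecs q" "f p = d" by blast
        obtain a c where ac: "a \<in> I" "c \<in> vecs q" "f (a, c) = d"
          using p by (cases p) auto
        define b where "b = uinv (\<phi> u) * \<phi> a"
        define v :: "nat \<Rightarrow> 'b" where "v k = uinv (\<phi> u) * \<phi> (c k)" for k
        have r: "rep I q b v u a c" unfolding rep_def b_def v_def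
          using u ac unitS[OF u(1)] by (simp add: mult.assoc[symmetric])
        have "b \<in> locJ I" using r unfolding rep_def locJ_def by blast
        moreover have "v \<in> vecs q" using ac(2) unfolding v_def vecs_def by simp
        moreover have "g (b, v) = w"
        proof
          fix k show "g (b, v) k = w k"
            using grep[OF r] ac(3) solveS[OF u(1) ud[of k]] unfolding val_def by simp
        qed
        ultimately show "w \<in> g ` (locJ I \<times> vecs q)" by force
      qed
    qed
  qed
  moreover have "\<forall>x\<in>locJ I \<times> vecs q. \<forall>y\<in>locJ I \<times> vecs q.
        g (fst x + fst y, \<lambda>k. snd x k + snd y k) = (\<lambda>k. g x k + g y k)"
  proof (clarify)
    fix b b' :: 'b and v v' :: "nat \<Rightarrow> 'b" assume m: "b \<in> locJ I" "v \<in> vecs q" "b' \<in> locJ I" "v' \<in> vecs q"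
    obtain s a c s' a' c' where "rep I q b v s a c" "rep I q b' v' s' a' c'" using ex[OF m(1,2)] ex[OF m(3,4)] by blast
    note rr = this
    obtain u a c a' c' where r1: "rep I q b v u a c" and r2: "rep I q b' v' u a' c'"
      using rep_common[OF I rr(1) rr(2)] by blast
    have r: "rep I q (b + b') (\<lambda>k. v k + v' k) u (a + a') (\<lambda>k. c k + c' k)"
      using r1 r2 li_add[OF I] unfolding rep_def vecs_def by (auto simp: distrib_left)
    show "g (fst (b, v) + fst (b', v'), \<lambda>k. snd (b, v) k + snd (b', v') k) = (\<lambda>k. g (b, v) k + g (b', v') k)"
      using grep[OF r] grep[OF r1] grep[OF r2] fadd'[of a c a' c'] r1 r2
      unfolding val_def rep_def by (simp add: distrib_left)
  qed
  moreover have "\<forall>\<beta>. \<forall>x\<in>locJ I \<times> vecs q. g (\<beta> * fst x, \<lambda>k. \<beta> * snd x k) = (\<lambda>k. \<beta> * g x k)"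
  proof (clarify)
    fix \<beta> b :: 'b and v :: "nat \<Rightarrow> 'b" assume m: "b \<in> locJ I" "v \<in> vecs q"
    obtain s a c where r: "rep I q b v s a c" using ex[OF m] by blast
    have s: "s \<in> S" using r unfolding rep_def by auto
    obtain y t where t: "t \<in> S" "\<phi> t * (\<beta> * uinv (\<phi> s)) = \<phi> y" using lfrac by blast
    have bb: "b = uinv (\<phi> s) * \<phi> a" using solveS s r unfolding rep_def by blast
    have vv: "v k = uinv (\<phi> s) * \<phi> (c k)" for k using solveS s r unfolding rep_def by blast
    have r': "rep I q (\<beta> * b) (\<lambda>k. \<beta> * v k) t (y * a) (\<lambda>k. y * c k)"
      unfolding rep_def using r t li_mult[OF I] unfolding rep_def vecs_def
      by (auto simp: bb vv mult.assoc[symmetric])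
    have ty: "uinv (\<phi> t) * \<phi> y = \<beta> * uinv (\<phi> s)"
      using solveS[OF t] by metis
    show "g (\<beta> * fst (b, v), \<lambda>k. \<beta> * snd (b, v) k) = (\<lambda>k. \<beta> * g (b, v) k)"
    proof
      fix k
      have "g (\<beta> * b, \<lambda>k. \<beta> * v k) k = uinv (\<phi> t) * \<phi> (f (y * a, \<lambda>k. y * c k) k)"
        using grep[OF r'] unfolding val_def by simp
      also have "\<dots> = uinv (\<phi> t) * \<phi> y * \<phi> (f (a, c) k)"
        using flin'[of a c y] r unfolding rep_def by (simp add: mult.assoc)
      also have "\<dots> = \<beta> * g (b, v) k" using ty grep[OF r] unfolding val_def by (simp add: mult.assoc)
      finally show "g (\<beta> * fst (b, v), \<lambda>k. \<beta> * snd (b, v) k) k = \<beta> * g (b, v) k" by simp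
    qed
  qed
  ultimately show ?thesis unfolding stably_free_left_def by blast
qed


lemma preimage_li: "left_ideal J \<Longrightarrow> left_ideal {a. \<phi> a \<in> J}"
  unfolding left_ideal_def by auto

lemma locJ_pre: assumes "left_ideal J" shows "locJ {a. \<phi> a \<in> J} = J"
proof
  show "locJ {a. \<phi> a \<in> J} \<subseteq> J"
  proof
    fix b assume "b \<in> locJ {a. \<phi> a \<in> J}"
    then obtain s a where "s \<in> S" "\<phi> a \<in> J" "\<phi> s * b = \<phi> a" unfolding locJ_def by blast
    then show "b \<in> J" using solveS assms unfolding left_ideal_def by metis
  qed
  show "J \<subseteq> locJ {a. \<phi> a \<in> J}"
  proof
    fix b assume b: "b \<in> J"
    obtain a s where "s \<in> S" "\<phi> s * b = \<phi> a" using lfrac by blast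
    moreover have "\<phi> s * b \<in> J" using b assms unfolding left_ideal_def by blast
    ultimately show "b \<in> locJ {a. \<phi> a \<in> J}" unfolding locJ_def by auto
  qed
qed

lemma B_domain: "is_domain TYPE('b)"
  unfolding is_domain_def
proof (intro allI impI)
  fix b1 b2 :: 'b assume e: "b1 * b2 = 0"
  obtain a1 s1 where s1: "s1 \<in> S" "\<phi> s1 * b1 = \<phi> a1" using lfrac by blast
  obtain a2 s2 where s2: "s2 \<in> S" "b2 * \<phi> s2 = \<phi> a2" using rfrac by blast
  have "\<phi> (a1 * a2) = (\<phi> s1 * b1) * (b2 * \<phi> s2)" using s1 s2 by simp
  also have "\<dots> = \<phi> s1 * (b1 * b2) * \<phi> s2" by (simp add: mult.assoc)
  finally have "\<phi> (a1 * a2) = \<phi> s1 * (b1 * b2) * \<phi> s2" .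
  then have "\<phi> (a1 * a2) = 0" using e by (simp only: mult_zero_left mult_zero_right)
  then have "a1 * a2 = 0" using hom_zero_iff by blast
  then have "a1 = 0 \<or> a2 = 0" using dom' by blast
  then show "b1 = 0 \<or> b2 = 0"
    by (metis hom_0 mult_zero_left mult_zero_right s1 s2 solveS solveS_r)
qed

lemma B_left_noeth: "left_noetherian TYPE('a) \<Longrightarrow> left_noetherian TYPE('b)"
  unfolding left_noetherian_def
proof (intro allI impI)
  fix J :: "nat \<Rightarrow> 'b set"
  assume ln: "\<forall>I :: nat \<Rightarrow> 'a set. (\<forall>n. left_ideal (I n)) \<and> mono I \<longrightarrow> (\<exists>n. \<forall>m\<ge>n. I m = I n)"
    and J: "(\<forall>n. left_ideal (J n)) \<and> mono J"
  define I where "I n = {a. \<phi> a \<in> J n}" for n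
  have "(\<forall>n. left_ideal (I n)) \<and> mono I"
    using J preimage_li unfolding I_def mono_def by blast
  then obtain N where N: "\<forall>m\<ge>N. I m = I N" using ln by blast
  have "J n = locJ (I n)" for n using locJ_pre J unfolding I_def by metis
  then show "\<exists>n. \<forall>m\<ge>n. J m = J n" using N by metis
qed

lemma B_right_noeth: "right_noetherian TYPE('a) \<Longrightarrow> right_noetherian TYPE('b)"
  unfolding right_noetherian_def
proof (intro allI impI)
  fix J :: "nat \<Rightarrow> 'b set"
  assume ln: "\<forall>I :: nat \<Rightarrow> 'a set. (\<forall>n. right_ideal (I n)) \<and> mono I \<longrightarrow> (\<exists>n. \<forall>m\<ge>n. I m = I n)"
    and J: "(\<forall>n. right_ideal (J n)) \<and> mono J"
  define I where "I n = {a. \<phi> a \<in> J n}" for n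
  have "\<forall>n. right_ideal (I n)" using J unfolding I_def right_ideal_def by auto
  moreover have "mono I" unfolding mono_def I_def using J[unfolded mono_def] by blast
  ultimately have "(\<forall>n. right_ideal (I n)) \<and> mono I" by blast
  then obtain N where N: "\<forall>m\<ge>N. I m = I N" using ln by blast
  have "J m = J N" if "m \<ge> N" for m
  proof
    show "J N \<subseteq> J m" using J that unfolding mono_def by blast
    show "J m \<subseteq> J N"
    proof
      fix b assume b: "b \<in> J m"
      obtain a s where s: "s \<in> S" "b * \<phi> s = \<phi> a" using rfrac by blast
      have "\<phi> a \<in> J m" using b s J unfolding right_ideal_def by metis
      then have "\<phi> a \<in> J N" using N that unfolding I_def by blast
      then show "b \<in> J N" using solveS_r[OF s] J unfolding right_ideal_def by metis
    qed
  qed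
  then show "\<exists>n. \<forall>m\<ge>n. J m = J n" by blast
qed

lemma B_sf_left: "(\<forall>I :: 'a set. left_ideal I \<longrightarrow> stably_free_left I) \<Longrightarrow>
   (\<forall>J :: 'b set. left_ideal J \<longrightarrow> stably_free_left J)"
proof (intro allI impI)
  fix J :: "'b set" assume h: "\<forall>I :: 'a set. left_ideal I \<longrightarrow> stably_free_left I" and J: "left_ideal J"
  have "stably_free_left {a. \<phi> a \<in> J}" using h preimage_li[OF J] by blast
  then have "stably_free_left (locJ {a. \<phi> a \<in> J})" using sf_transfer[OF preimage_li[OF J]] by blast
  then show "stably_free_left J" using locJ_pre[OF J] by simp
qed

lemma B_ore_left: "(\<forall>a b :: 'a. a \<noteq> 0 \<and> b \<noteq> 0 \<longrightarrow> (\<exists>x y. x * a = y * b \<and> x * a \<noteq> 0)) \<Longrightarrow>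
  (\<forall>a b :: 'b. a \<noteq> 0 \<and> b \<noteq> 0 \<longrightarrow> (\<exists>x y. x * a = y * b \<and> x * a \<noteq> 0))"
proof (intro allI impI)
  fix b1 b2 :: 'b
  assume o: "\<forall>a b :: 'a. a \<noteq> 0 \<and> b \<noteq> 0 \<longrightarrow> (\<exists>x y. x * a = y * b \<and> x * a \<noteq> 0)"
    and nz: "b1 \<noteq> 0 \<and> b2 \<noteq> 0"
  obtain a1 s1 where s1: "s1 \<in> S" "\<phi> s1 * b1 = \<phi> a1" using lfrac by blast
  obtain a2 s2 where s2: "s2 \<in> S" "\<phi> s2 * b2 = \<phi> a2" using lfrac by blast
  have "a1 \<noteq> 0" "a2 \<noteq> 0" using nz s1 s2 solveS by fastforce+
  then obtain x y where xy: "x * a1 = y * a2" "x * a1 \<noteq> 0" using o by blast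
  show "\<exists>x y. x * b1 = y * b2 \<and> x * b1 \<noteq> 0"
  proof (intro exI conjI)
    have e1: "(\<phi> x * \<phi> s1) * b1 = \<phi> (x * a1)" using s1 by (simp add: mult.assoc)
    have e2: "(\<phi> y * \<phi> s2) * b2 = \<phi> (y * a2)" using s2 by (simp add: mult.assoc)
    show "(\<phi> x * \<phi> s1) * b1 = (\<phi> y * \<phi> s2) * b2" using e1 e2 xy by simp
    show "(\<phi> x * \<phi> s1) * b1 \<noteq> 0" using e1 xy hom_zero_iff by metis
  qed
qed

lemma B_ore_right: "(\<forall>a b :: 'a. a \<noteq> 0 \<and> b \<noteq> 0 \<longrightarrow> (\<exists>x y. a * x = b * y \<and> a * x \<noteq> 0)) \<Longrightarrow>
  (\<forall>a b :: 'b. a \<noteq> 0 \<and> b \<noteq> 0 \<longrightarrow> (\<exists>x y. a * x = b * y \<and> a * x \<noteq> 0))"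
proof (intro allI impI)
  fix b1 b2 :: 'b
  assume o: "\<forall>a b :: 'a. a \<noteq> 0 \<and> b \<noteq> 0 \<longrightarrow> (\<exists>x y. a * x = b * y \<and> a * x \<noteq> 0)"
    and nz: "b1 \<noteq> 0 \<and> b2 \<noteq> 0"
  obtain a1 s1 where s1: "s1 \<in> S" "b1 * \<phi> s1 = \<phi> a1" using rfrac by blast
  obtain a2 s2 where s2: "s2 \<in> S" "b2 * \<phi> s2 = \<phi> a2" using rfrac by blast
  have "a1 \<noteq> 0" "a2 \<noteq> 0" using nz s1 s2 solveS_r by fastforce+
  then obtain x y where xy: "a1 * x = a2 * y" "a1 * x \<noteq> 0" using o by blast
  show "\<exists>x y. b1 * x = b2 * y \<and> b1 * x \<noteq> 0"
  proof (intro exI conjI)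
    have e1: "b1 * (\<phi> s1 * \<phi> x) = \<phi> (a1 * x)" using s1 by (simp add: mult.assoc[symmetric])
    have e2: "b2 * (\<phi> s2 * \<phi> y) = \<phi> (a2 * y)" using s2 by (simp add: mult.assoc[symmetric])
    show "b1 * (\<phi> s1 * \<phi> x) = b2 * (\<phi> s2 * \<phi> y)" using e1 e2 xy by simp
    show "b1 * (\<phi> s1 * \<phi> x) \<noteq> 0" using e1 xy hom_zero_iff by metis
  qed
qed

end

lemma sum_in_li: "finite A \<Longrightarrow> left_ideal K \<Longrightarrow> (\<forall>x\<in>A. f x \<in> K) \<Longrightarrow> sum f A \<in> K"
proof (induction A rule: finite_induct)
  case empty then show ?case by (simp add: left_ideal_def)
next
  case (insert x F) then show ?case by (simp add: left_ideal_def)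
qed

lemma ls_ideal: "left_ideal (left_span G)"
  unfolding left_ideal_def left_span_def
proof (intro conjI ballI allI)
  show "0 \<in> {x. \<exists>c. x = (\<Sum>g\<in>G. c g * g)}" by (rule CollectI, rule exI[of _ "\<lambda>_. 0"]) simp
next
  fix x y assume "x \<in> {x. \<exists>c. x = (\<Sum>g\<in>G. c g * g)}" "y \<in> {x. \<exists>c. x = (\<Sum>g\<in>G. c g * g)}"
  then obtain c d where "x = (\<Sum>g\<in>G. c g * g)" "y = (\<Sum>g\<in>G. d g * g)" by blast
  then show "x + y \<in> {x. \<exists>c. x = (\<Sum>g\<in>G. c g * g)}"
    by (intro CollectI exI[of _ "\<lambda>g. c g + d g"]) (simp add: sum.distrib distrib_right)
next
  fix a x assume "x \<in> {x. \<exists>c. x = (\<Sum>g\<in>G. c g * g)}"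
  then obtain c where "x = (\<Sum>g\<in>G. c g * g)" by blast
  then show "a * x \<in> {x. \<exists>c. x = (\<Sum>g\<in>G. c g * g)}"
    by (intro CollectI exI[of _ "\<lambda>g. a * c g"]) (simp add: sum_distrib_left mult.assoc)
qed

lemma ls_sub: "finite G \<Longrightarrow> G \<subseteq> left_span G"
  unfolding left_span_def
proof
  fix h assume "finite G" "h \<in> G"
  then have "(\<Sum>g\<in>G. (if g = h then 1 else 0) * g) = (\<Sum>g\<in>G. if g = h then h else 0)"
    by (intro sum.cong) auto
  also have "\<dots> = h" using \<open>finite G\<close> \<open>h \<in> G\<close> by (simp add: sum.delta)
  finally have "(\<Sum>g\<in>G. (if g = h then 1 else 0) * g) = h" .
  then show "h \<in> {x. \<exists>c. x = (\<Sum>g\<in>G. c g * g)}"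
    by (intro CollectI exI[of _ "\<lambda>g. if g = h then 1 else 0"]) simp
qed

lemma ls_min: assumes "finite G" "left_ideal K" "G \<subseteq> K" shows "left_span G \<subseteq> K"
  unfolding left_span_def
proof clarify
  fix c :: "'a \<Rightarrow> 'a"
  have "\<forall>g\<in>G. c g * g \<in> K" using assms unfolding left_ideal_def by blast
  then show "(\<Sum>g\<in>G. c g * g) \<in> K" using sum_in_li[OF assms(1,2), of "\<lambda>g. c g * g"] by blast
qed


context loc begin

lemma B_fg_left: "(\<forall>I :: 'a set. fg_left_ideal I \<longrightarrow> stably_free_left I) \<Longrightarrow>
   (\<forall>J :: 'b set. fg_left_ideal J \<longrightarrow> stably_free_left J)"
proof (intro allI impI)
  fix J :: "'b set"
  assume h: "\<forall>I :: 'a set. fg_left_ideal I \<longrightarrow> stably_free_left I" and "fg_left_ideal J"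
  then obtain G where G: "finite G" "J = left_span G" unfolding fg_left_ideal_def by blast
  have "\<forall>g. \<exists>s a. s \<in> S \<and> \<phi> s * g = \<phi> a" using lfrac by metis
  then obtain sg ag where sg: "\<And>g. sg g \<in> S" "\<And>g. \<phi> (sg g) * g = \<phi> (ag g)" by metis
  define I0 where "I0 = left_span (ag ` G)"
  have I0: "left_ideal I0" unfolding I0_def by (rule ls_ideal)
  have "fg_left_ideal I0" unfolding I0_def fg_left_ideal_def using G by blast
  then have "stably_free_left (locJ I0)" using h sf_transfer[OF I0] by blast
  moreover have "locJ I0 = J"
  proof
    have Jl: "left_ideal J" using G ls_ideal by simp
    have "ag ` G \<subseteq> {a. \<phi> a \<in> J}"
    proof
      fix a assume "a \<in> ag ` G"
      then obtain g where "g \<in> G" "a = ag g" by blast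
      then have "g \<in> J" using G ls_sub by blast
      then have "\<phi> (sg g) * g \<in> J" using Jl unfolding left_ideal_def by blast
      then show "a \<in> {a. \<phi> a \<in> J}" using sg(2)[of g] \<open>a = ag g\<close> by simp
    qed
    then have "I0 \<subseteq> {a. \<phi> a \<in> J}" unfolding I0_def using ls_min G preimage_li[OF Jl] by blast
    then show "locJ I0 \<subseteq> J" using locJ_pre[OF Jl] unfolding locJ_def by blast
    have "G \<subseteq> locJ I0"
    proof
      fix g assume "g \<in> G"
      then have "ag g \<in> I0" unfolding I0_def using ls_sub G by blast
      then show "g \<in> locJ I0" unfolding locJ_def using sg by blast
    qed
    then show "J \<subseteq> locJ I0" using G ls_min locJ_ideal[OF I0] by blast
  qed
  ultimately show "stably_free_left J" by simp
qed

end

context loc begin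

lemma opp_loc: "loc (Opp ` S) (\<lambda>x. Opp (\<phi> (unOpp x)))"
proof
  show "two_sided_denominator_set (Opp ` S)" by (rule opp_den[OF den])
  show "0 \<notin> Opp ` S" using zS by (auto simp: opp_zero)
  show "is_domain TYPE('a opp)" by (rule opp_domain[OF dom])
  have h1: "Opp (\<phi> (unOpp 1)) = 1" by simp
  have h2: "\<forall>x y. Opp (\<phi> (unOpp (x + y))) = Opp (\<phi> (unOpp x)) + Opp (\<phi> (unOpp y))" by simp
  have h3: "\<forall>x y. Opp (\<phi> (unOpp (x * y))) = Opp (\<phi> (unOpp x)) * Opp (\<phi> (unOpp y))" by simp
  have h4: "\<forall>s\<in>Opp ` S. \<exists>v. Opp (\<phi> (unOpp s)) * v = 1 \<and> v * Opp (\<phi> (unOpp s)) = 1"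
  proof
    fix s assume "s \<in> Opp ` S"
    then obtain s0 where s0: "s0 \<in> S" "s = Opp s0" by blast
    show "\<exists>v. Opp (\<phi> (unOpp s)) * v = 1 \<and> v * Opp (\<phi> (unOpp s)) = 1"
      using unitS[OF s0(1)] s0(2) by (intro exI[of _ "Opp (uinv (\<phi> s0))"]) simp
  qed
  have h5: "\<forall>b. \<exists>a. \<exists>s\<in>Opp ` S. b * Opp (\<phi> (unOpp s)) = Opp (\<phi> (unOpp a))"
  proof
    fix b :: "'b opp"
    obtain a0 s0 where "s0 \<in> S" "\<phi> s0 * unOpp b = \<phi> a0" using lfrac by blast
    then show "\<exists>a. \<exists>s\<in>Opp ` S. b * Opp (\<phi> (unOpp s)) = Opp (\<phi> (unOpp a))"
      by (intro exI[of _ "Opp a0"] bexI[of _ "Opp s0"]) (auto simp: times_opp_def)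
  qed
  have h6: "\<forall>b. \<exists>a. \<exists>s\<in>Opp ` S. Opp (\<phi> (unOpp s)) * b = Opp (\<phi> (unOpp a))"
  proof
    fix b :: "'b opp"
    obtain a0 s0 where "s0 \<in> S" "unOpp b * \<phi> s0 = \<phi> a0" using rfrac by blast
    then show "\<exists>a. \<exists>s\<in>Opp ` S. Opp (\<phi> (unOpp s)) * b = Opp (\<phi> (unOpp a))"
      by (intro exI[of _ "Opp a0"] bexI[of _ "Opp s0"]) (auto simp: times_opp_def)
  qed
  have h7: "\<forall>a. Opp (\<phi> (unOpp a)) = 0 \<longleftrightarrow> (\<exists>s\<in>Opp ` S. a * s = 0)"
  proof
    fix a :: "'a opp"
    have "(\<exists>s\<in>Opp ` S. a * s = 0) \<longleftrightarrow> unOpp a = 0"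
    proof
      assume "\<exists>s\<in>Opp ` S. a * s = 0"
      then obtain s0 where "s0 \<in> S" "s0 * unOpp a = 0" by (auto simp: times_opp_def)
      then show "unOpp a = 0" using zS dom' by fastforce
    next
      assume "unOpp a = 0"
      then have "a * Opp 1 = 0" by (simp add: times_opp_def opp_zero)
      then show "\<exists>s\<in>Opp ` S. a * s = 0" using S1 by blast
    qed
    then show "Opp (\<phi> (unOpp a)) = 0 \<longleftrightarrow> (\<exists>s\<in>Opp ` S. a * s = 0)" using hom_zero_iff by simp
  qed
  show "classical_localization (Opp ` S) (\<lambda>x. Opp (\<phi> (unOpp x)))"
    unfolding classical_localization_def ring_hom_def is_unit_def
    using h1 h2 h3 h4 h5 h6 h7 by blast
qed

lemma B_sf_right: "(\<forall>I :: 'a set. right_ideal I \<longrightarrow> stably_free_right I) \<Longrightarrow>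
   (\<forall>J :: 'b set. right_ideal J \<longrightarrow> stably_free_right J)"
proof (intro allI impI)
  fix J :: "'b set"
  assume h: "\<forall>I :: 'a set. right_ideal I \<longrightarrow> stably_free_right I" and J: "right_ideal J"
  interpret o: loc "Opp ` S" "\<lambda>x. Opp (\<phi> (unOpp x))" by (rule opp_loc)
  have "\<forall>I' :: 'a opp set. left_ideal I' \<longrightarrow> stably_free_left I'"
  proof (intro allI impI)
    fix I' :: "'a opp set" assume "left_ideal I'"
    then have "right_ideal (unOpp ` I')" using opp_li[of "unOpp ` I'", unfolded Opp_unOpp_img] by blast
    then have "stably_free_right (unOpp ` I')" using h by blast
    then show "stably_free_left I'" using sfr_to_sfl[of "unOpp ` I'", unfolded Opp_unOpp_img] by blast
  qed
  then have "\<forall>J' :: 'b opp set. left_ideal J' \<longrightarrow> stably_free_left J'" by (rule o.B_sf_left)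
  then have "stably_free_left (Opp ` J)" using opp_li J by blast
  then show "stably_free_right J" by (rule sfl_to_sfr)
qed

lemma B_fg_right: "(\<forall>I :: 'a set. fg_right_ideal I \<longrightarrow> stably_free_right I) \<Longrightarrow>
   (\<forall>J :: 'b set. fg_right_ideal J \<longrightarrow> stably_free_right J)"
proof (intro allI impI)
  fix J :: "'b set"
  assume h: "\<forall>I :: 'a set. fg_right_ideal I \<longrightarrow> stably_free_right I" and J: "fg_right_ideal J"
  interpret o: loc "Opp ` S" "\<lambda>x. Opp (\<phi> (unOpp x))" by (rule opp_loc)
  have "\<forall>I' :: 'a opp set. fg_left_ideal I' \<longrightarrow> stably_free_left I'"
  proof (intro allI impI)
    fix I' :: "'a opp set" assume "fg_left_ideal I'"
    then have "fg_right_ideal (unOpp ` I')" using opp_fg[of "unOpp ` I'", unfolded Opp_unOpp_img] by blast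
    then have "stably_free_right (unOpp ` I')" using h by blast
    then show "stably_free_left I'" using sfr_to_sfl[of "unOpp ` I'", unfolded Opp_unOpp_img] by blast
  qed
  then have "\<forall>J' :: 'b opp set. fg_left_ideal J' \<longrightarrow> stably_free_left J'" by (rule o.B_fg_left)
  then have "stably_free_left (Opp ` J)" using opp_fg J by blast
  then show "stably_free_right J" by (rule sfl_to_sfr)
qed

end

theorem mainTheorem10:
  fixes S :: "'a::ring_1 set" and \<phi> :: "'a \<Rightarrow> 'b::ring_1"
  assumes "two_sided_denominator_set S" and "0 \<notin> S"
    and "classical_localization S \<phi>"
  shows "(stably_free_ideal_domain TYPE('a) \<longrightarrow> stably_free_ideal_domain TYPE('b)) \<and>
         (semistably_free_ideal_domain TYPE('a) \<longrightarrow> semistably_free_ideal_domain TYPE('b))"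
proof (intro conjI impI)
  assume h: "stably_free_ideal_domain TYPE('a)"
  then have d: "is_domain TYPE('a)" unfolding stably_free_ideal_domain_def by blast
  interpret l: loc S \<phi> by (rule loc.intro[OF assms d])
  show "stably_free_ideal_domain TYPE('b)"
    using h l.B_domain l.B_left_noeth l.B_right_noeth l.B_sf_left l.B_sf_right
    unfolding stably_free_ideal_domain_def by blast
next
  assume h: "semistably_free_ideal_domain TYPE('a)"
  then have d: "is_domain TYPE('a)" unfolding semistably_free_ideal_domain_def ore_domain_def by blast
  interpret l: loc S \<phi> by (rule loc.intro[OF assms d])
  show "semistably_free_ideal_domain TYPE('b)"
    using h l.B_domain l.B_ore_left l.B_ore_right l.B_fg_left l.B_fg_right
    unfolding semistably_free_ideal_domain_def ore_domain_def by blast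
qed

end
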